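(* Let $A=\langle Q,\delta,\gamma,F\rangle$ be a pomset automaton. If $q\xrightarrow{U}_A q'$, then there exist $\ell\in\mathbb N$, states $q_0,\dots,q_\ell\in Q$ with $q_0=q$ and $q_\ell=q'$, and pomsets $U_0,\dots,U_{\ell-1}$ with $U=U_0\cdots U_{\ell-1}$, such that for each $0\le i<\ell$ the trace $q_i\xrightarrow{U_i}_A q_{i+1}$ is a unit trace.
   Context: Fix a finite alphabet $\Sigma$; pomsets are isomorphism classes of $\Sigma$-labelled posets, $1$ the empty pomset, $a\in\Sigma$ the one-point pomset, $\cdot,\parallel$ sequential/parallel composition, $\mathsf{Pom}^{\mathsf{sp}}$ the smallest set containing $1$ and all $a$ closed under both; the empty product $U_0\cdots U_{-1}$ is $1$. A PA is $A=\langle Q,\delta,\gamma,F\rangle$ with $F\subseteq Q$, $\delta:Q\times\Sigma\to Q$, $\gamma:Q^3\to Q$, with states $\bot\notin F$, $\top\in F$ such that $\delta(\bot,a)=\delta(\top,a)=\bot$, $\gamma(\bot,r,s)=\gamma(\top,r,s)=\bot$. Traces: the smallest relation with $q\xrightarrow{1}_A q$; $q\xrightarrow{a}_A\delta(q,a)$; $q\xrightarrow{U}_A q''\xrightarrow{V}_A q'$ implies $q\xrightarrow{U\cdot V}_A q'$; $r\xrightarrow{U}_A r'\in F$, $s\xrightarrow{V}_A s'\in F$ imply $q\xrightarrow{U\parallel V}_A\gamma(q,r,s)$. A unit trace is either a $\delta$-trace $q\xrightarrow{a}_A\delta(q,a)$ for some $a\in\Sigma$, or a $\gamma$-trace $q\xrightarrow{V\parallel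 W}_A\gamma(q,r,s)$ where $r\xrightarrow{V}_A r'$ and $s\xrightarrow{W}_A s'$ for some $r',s'\in F$. *)

theory Defs
  imports Main
begin

text \<open>A labelled poset is represented concretely by a carrier (a set of natural numbers),
  a (reflexive) partial order on it, and a labelling function (only relevant on the carrier).\<close>

type_synonym 'a lpo = "nat set \<times> (nat \<times> nat) set \<times> (nat \<Rightarrow> 'a)"

definition car :: "'a lpo \<Rightarrow> nat set" where "car X = fst X"
definition ord :: "'a lpo \<Rightarrow> (nat \<times> nat) set" where "ord X = fst (snd X)"
definition lab :: "'a lpo \<Rightarrow> nat \<Rightarrow> 'a" where "lab X = snd (snd X)"

definition wf_lpo :: "'a lpo \<Rightarrow> bool" where
  "wf_lpo X \<longleftrightarrow> finite (car X) \<and> ord X \<subseteq> car X \<times> car X \<and> partial_order_on (car X) (ord X)"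

definition lpo_iso :: "'a lpo \<Rightarrow> 'a lpo \<Rightarrow> bool" where
  "lpo_iso X Y \<longleftrightarrow> (\<exists>f. bij_betw f (car X) (car Y)
      \<and> (\<forall>x\<in>car X. lab Y (f x) = lab X x)
      \<and> (\<forall>x\<in>car X. \<forall>y\<in>car X. (x, y) \<in> ord X \<longleftrightarrow> (f x, f y) \<in> ord Y))"

definition pom_rel :: "'a lpo \<Rightarrow> 'a lpo \<Rightarrow> bool" where
  "pom_rel X Y \<longleftrightarrow> wf_lpo X \<and> wf_lpo Y \<and> lpo_iso X Y"

lemma lpo_iso_refl: "lpo_iso X X"
  unfolding lpo_iso_def by (rule exI[of _ id]) auto

lemma lpo_iso_sym: assumes "lpo_iso X Y" shows "lpo_iso Y X"
proof -
  from assms obtain f where f: "bij_betw f (car X) (car Y)"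
    "\<forall>x\<in>car X. lab Y (f x) = lab X x"
    "\<forall>x\<in>car X. \<forall>y\<in>car X. (x, y) \<in> ord X \<longleftrightarrow> (f x, f y) \<in> ord Y"
    unfolding lpo_iso_def by blast
  let ?g = "inv_into (car X) f"
  have g: "bij_betw ?g (car Y) (car X)" using f(1) by (rule bij_betw_inv_into)
  have gi: "\<And>y. y \<in> car Y \<Longrightarrow> f (?g y) = y" using f(1)
    by (meson bij_betw_inv_into_right)
  have gm: "\<And>y. y \<in> car Y \<Longrightarrow> ?g y \<in> car X" using g bij_betwE by blast
  show ?thesis unfolding lpo_iso_def
    apply (rule exI[of _ ?g])
    using g gi gm f(2,3) by metis
qed

lemma lpo_iso_trans: assumes "lpo_iso X Y" "lpo_iso Y Z" shows "lpo_iso X Z"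
proof -
  from assms(1) obtain f where f: "bij_betw f (car X) (car Y)"
    "\<forall>x\<in>car X. lab Y (f x) = lab X x"
    "\<forall>x\<in>car X. \<forall>y\<in>car X. (x, y) \<in> ord X \<longleftrightarrow> (f x, f y) \<in> ord Y"
    unfolding lpo_iso_def by blast
  from assms(2) obtain g where g: "bij_betw g (car Y) (car Z)"
    "\<forall>x\<in>car Y. lab Z (g x) = lab Y x"
    "\<forall>x\<in>car Y. \<forall>y\<in>car Y. (x, y) \<in> ord Y \<longleftrightarrow> (g x, g y) \<in> ord Z"
    unfolding lpo_iso_def by blast
  have m: "\<And>x. x \<in> car X \<Longrightarrow> f x \<in> car Y" using f(1) bij_betwE by blast
  show ?thesis unfolding lpo_iso_def
    apply (rule exI[of _ "g \<circ> f"])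
    using bij_betw_trans[OF f(1) g(1)] f(2,3) g(2,3) m by auto
qed

lemma part_equivp_pom_rel: "part_equivp pom_rel"
proof (rule part_equivpI)
  have "wf_lpo ({}, {}, \<lambda>_. undefined)"
    unfolding wf_lpo_def car_def ord_def partial_order_on_def preorder_on_def
      refl_on_def trans_def antisym_def by simp
  then show "\<exists>x. pom_rel x x" unfolding pom_rel_def using lpo_iso_refl by blast
  show "symp pom_rel" unfolding symp_def pom_rel_def using lpo_iso_sym by blast
  show "transp pom_rel" unfolding transp_def pom_rel_def using lpo_iso_trans by blast
qed

quotient_type 'a pomset = "'a lpo" / partial: pom_rel
  by (rule part_equivp_pom_rel)

text \<open>Raw constructions on representatives (disjoint union via even/odd encoding).\<close>

definition one_raw :: "'a lpo" where
  "one_raw = ({}, {}, \<lambda>_. undefined)"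

definition atom_raw :: "'a \<Rightarrow> 'a lpo" where
  "atom_raw a = ({0}, {(0, 0)}, \<lambda>_. a)"

definition emb_l :: "nat \<Rightarrow> nat" where "emb_l n = 2 * n"
definition emb_r :: "nat \<Rightarrow> nat" where "emb_r n = 2 * n + 1"

definition par_raw :: "'a lpo \<Rightarrow> 'a lpo \<Rightarrow> 'a lpo" where
  "par_raw X Y =
    (emb_l ` car X \<union> emb_r ` car Y,
     map_prod emb_l emb_l ` ord X \<union> map_prod emb_r emb_r ` ord Y,
     \<lambda>m. if even m then lab X (m div 2) else lab Y (m div 2))"

definition seq_raw :: "'a lpo \<Rightarrow> 'a lpo \<Rightarrow> 'a lpo" where
  "seq_raw X Y =
    (emb_l ` car X \<union> emb_r ` car Y,
     map_prod emb_l emb_l ` ord X \<union> map_prod emb_r emb_r ` ord Y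
       \<union> (emb_l ` car X) \<times> (emb_r ` car Y),
     \<lambda>m. if even m then lab X (m div 2) else lab Y (m div 2))"

definition pom_one :: "'a pomset" ("\<one>\<^sub>p") where
  "pom_one = abs_pomset one_raw"

definition pom_atom :: "'a \<Rightarrow> 'a pomset" where
  "pom_atom a = abs_pomset (atom_raw a)"

definition pom_seq :: "'a pomset \<Rightarrow> 'a pomset \<Rightarrow> 'a pomset" (infixl "\<cdot>\<^sub>p" 70) where
  "pom_seq U V = abs_pomset (seq_raw (rep_pomset U) (rep_pomset V))"

definition pom_par :: "'a pomset \<Rightarrow> 'a pomset \<Rightarrow> 'a pomset" (infixl "\<parallel>\<^sub>p" 65) where
  "pom_par U V = abs_pomset (par_raw (rep_pomset U) (rep_pomset V))"

fun pom_seqs :: "'a pomset list \<Rightarrow> 'a pomset" where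
  "pom_seqs [] = pom_one"
| "pom_seqs (U # Us) = pom_seq U (pom_seqs Us)"

definition is_PA :: "('q \<Rightarrow> 'a::finite \<Rightarrow> 'q) \<Rightarrow> ('q \<Rightarrow> 'q \<Rightarrow> 'q \<Rightarrow> 'q) \<Rightarrow> 'q set
    \<Rightarrow> 'q \<Rightarrow> 'q \<Rightarrow> bool" where
  "is_PA \<delta> \<gamma> F qbot qtop \<longleftrightarrow> qbot \<notin> F \<and> qtop \<in> F
     \<and> (\<forall>a. \<delta> qbot a = qbot \<and> \<delta> qtop a = qbot)
     \<and> (\<forall>r s. \<gamma> qbot r s = qbot \<and> \<gamma> qtop r s = qbot)"

inductive trace :: "('q \<Rightarrow> 'a::finite \<Rightarrow> 'q) \<Rightarrow> ('q \<Rightarrow> 'q \<Rightarrow> 'q \<Rightarrow> 'q) \<Rightarrow> 'q set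
    \<Rightarrow> 'q \<Rightarrow> 'a pomset \<Rightarrow> 'q \<Rightarrow> bool"
  for \<delta> \<gamma> F where
  tr_one: "trace \<delta> \<gamma> F q pom_one q"
| tr_atom: "trace \<delta> \<gamma> F q (pom_atom a) (\<delta> q a)"
| tr_seq: "trace \<delta> \<gamma> F q U q'' \<Longrightarrow> trace \<delta> \<gamma> F q'' V q' \<Longrightarrow> trace \<delta> \<gamma> F q (pom_seq U V) q'"
| tr_par: "trace \<delta> \<gamma> F r U r' \<Longrightarrow> r' \<in> F \<Longrightarrow> trace \<delta> \<gamma> F s V s' \<Longrightarrow> s' \<in> F
           \<Longrightarrow> trace \<delta> \<gamma> F q (pom_par U V) (\<gamma> q r s)"

definition unit_trace :: "('q \<Rightarrow> 'a::finite \<Rightarrow> 'q) \<Rightarrow> ('q \<Rightarrow> 'q \<Rightarrow> 'q \<Rightarrow> 'q) \<Rightarrow> 'q set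
    \<Rightarrow> 'q \<Rightarrow> 'a pomset \<Rightarrow> 'q \<Rightarrow> bool" where
  "unit_trace \<delta> \<gamma> F q U q' \<longleftrightarrow>
     (\<exists>a. U = pom_atom a \<and> q' = \<delta> q a)
   \<or> (\<exists>V W r s r' s'. U = pom_par V W \<and> q' = \<gamma> q r s
        \<and> trace \<delta> \<gamma> F r V r' \<and> r' \<in> F \<and> trace \<delta> \<gamma> F s W s' \<and> s' \<in> F)"

end

theory Submission imports Defs begin

lemma in_emb_l: "m \<in> emb_l ` A \<longleftrightarrow> even m \<and> m div 2 \<in> A"
proof
  assume "m \<in> emb_l ` A" then show "even m \<and> m div 2 \<in> A" unfolding emb_l_def by auto
next
  assume "even m \<and> m div 2 \<in> A" then show "m \<in> emb_l ` A"
    unfolding emb_l_def by (intro image_eqI[of _ _ "m div 2"]) auto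
qed

lemma in_emb_r: "m \<in> emb_r ` A \<longleftrightarrow> odd m \<and> m div 2 \<in> A"
proof
  assume "m \<in> emb_r ` A" then show "odd m \<and> m div 2 \<in> A" unfolding emb_r_def by auto
next
  assume "odd m \<and> m div 2 \<in> A" then show "m \<in> emb_r ` A"
    unfolding emb_r_def by (intro image_eqI[of _ _ "m div 2"]) auto
qed

lemma in_map_l: "(a, b) \<in> map_prod emb_l emb_l ` R \<longleftrightarrow> even a \<and> even b \<and> (a div 2, b div 2) \<in> R"
proof
  assume "(a, b) \<in> map_prod emb_l emb_l ` R" then show "even a \<and> even b \<and> (a div 2, b div 2) \<in> R" unfolding emb_l_def by auto
next
  assume "even a \<and> even b \<and> (a div 2, b div 2) \<in> R" then show "(a, b) \<in> map_prod emb_l emb_l ` R"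
    unfolding emb_l_def by (intro image_eqI[of _ _ "(a div 2, b div 2)"]) auto
qed

lemma in_map_r: "(a, b) \<in> map_prod emb_r emb_r ` R \<longleftrightarrow> odd a \<and> odd b \<and> (a div 2, b div 2) \<in> R"
proof
  assume "(a, b) \<in> map_prod emb_r emb_r ` R" then show "odd a \<and> odd b \<and> (a div 2, b div 2) \<in> R" unfolding emb_r_def by auto
next
  assume "odd a \<and> odd b \<and> (a div 2, b div 2) \<in> R" then show "(a, b) \<in> map_prod emb_r emb_r ` R"
    unfolding emb_r_def by (intro image_eqI[of _ _ "(a div 2, b div 2)"]) auto
qed

lemma car_seq: "m \<in> car (seq_raw X Y) \<longleftrightarrow> (even m \<and> m div 2 \<in> car X) \<or> (odd m \<and> m div 2 \<in> car Y)"
  unfolding seq_raw_def by (simp add: car_def in_emb_l in_emb_r)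

lemma lab_seq: "lab (seq_raw X Y) m = (if even m then lab X (m div 2) else lab Y (m div 2))"
  unfolding seq_raw_def lab_def by simp

lemma ord_seq: "(a, b) \<in> ord (seq_raw X Y) \<longleftrightarrow>
   (even a \<and> even b \<and> (a div 2, b div 2) \<in> ord X) \<or> (odd a \<and> odd b \<and> (a div 2, b div 2) \<in> ord Y)
   \<or> (even a \<and> odd b \<and> a div 2 \<in> car X \<and> b div 2 \<in> car Y)"
  unfolding seq_raw_def by (auto simp add: ord_def car_def in_emb_l in_emb_r in_map_l in_map_r)


lemma par_eq: "even a = even (b::nat) \<Longrightarrow> a div 2 = b div 2 \<Longrightarrow> a = b"
  by (metis div_mult_mod_eq mod2_eq_if)

lemma wf_seq: assumes "wf_lpo X" "wf_lpo Y" shows "wf_lpo (seq_raw X Y)"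
proof -
  have fin: "finite (car (seq_raw X Y))" using assms unfolding seq_raw_def car_def wf_lpo_def by simp
  have X: "ord X \<subseteq> car X \<times> car X" "refl_on (car X) (ord X)" "trans (ord X)" "antisym (ord X)"
    and Y: "ord Y \<subseteq> car Y \<times> car Y" "refl_on (car Y) (ord Y)" "trans (ord Y)" "antisym (ord Y)"
    using assms unfolding wf_lpo_def partial_order_on_def preorder_on_def by auto
  have sub: "ord (seq_raw X Y) \<subseteq> car (seq_raw X Y) \<times> car (seq_raw X Y)"
  proof
    fix p assume "p \<in> ord (seq_raw X Y)"
    then show "p \<in> car (seq_raw X Y) \<times> car (seq_raw X Y)"
      using X(1) Y(1) by (cases p) (auto simp: ord_seq car_seq)
  qed
  have refl: "refl_on (car (seq_raw X Y)) (ord (seq_raw X Y))"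
    using X(2) Y(2) by (auto simp: refl_on_def ord_seq car_seq)
  have tr: "trans (ord (seq_raw X Y))"
  proof (rule transI)
    fix a b c assume "(a, b) \<in> ord (seq_raw X Y)" "(b, c) \<in> ord (seq_raw X Y)"
    then show "(a, c) \<in> ord (seq_raw X Y)" using X(1,3) Y(1,3)
      unfolding ord_seq by (auto dest: transD)
  qed
  have an: "antisym (ord (seq_raw X Y))"
  proof (rule antisymI)
    fix a b assume "(a, b) \<in> ord (seq_raw X Y)" "(b, a) \<in> ord (seq_raw X Y)"
    then have "even a = even b" "a div 2 = b div 2" using X(4) Y(4)
      unfolding ord_seq by (auto dest: antisymD)
    then show "a = b" by (rule par_eq)
  qed
  show ?thesis unfolding wf_lpo_def partial_order_on_def preorder_on_def
    using fin sub refl tr an by auto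
qed

lemma iso_intro:
  assumes "\<And>x. x \<in> car X \<Longrightarrow> f x \<in> car Y" "\<And>y. y \<in> car Y \<Longrightarrow> g y \<in> car X"
    "\<And>x. x \<in> car X \<Longrightarrow> g (f x) = x" "\<And>y. y \<in> car Y \<Longrightarrow> f (g y) = y"
    "\<And>x. x \<in> car X \<Longrightarrow> lab Y (f x) = lab X x"
    "\<And>x y. x \<in> car X \<Longrightarrow> y \<in> car X \<Longrightarrow> (x, y) \<in> ord X \<longleftrightarrow> (f x, f y) \<in> ord Y"
  shows "lpo_iso X Y"
  unfolding lpo_iso_def
  apply (rule exI[of _ f])
  using assms bij_betw_byWitness[of "car X" g f "car Y"] by auto


lemma iso_seq: assumes "lpo_iso X X'" "lpo_iso Y Y'" shows "lpo_iso (seq_raw X Y) (seq_raw X' Y')"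
proof -
  from assms(1) obtain f where f: "bij_betw f (car X) (car X')"
    "\<forall>x\<in>car X. lab X' (f x) = lab X x"
    "\<forall>x\<in>car X. \<forall>y\<in>car X. (x, y) \<in> ord X \<longleftrightarrow> (f x, f y) \<in> ord X'"
    unfolding lpo_iso_def by blast
  from assms(2) obtain g where g: "bij_betw g (car Y) (car Y')"
    "\<forall>x\<in>car Y. lab Y' (g x) = lab Y x"
    "\<forall>x\<in>car Y. \<forall>y\<in>car Y. (x, y) \<in> ord Y \<longleftrightarrow> (g x, g y) \<in> ord Y'"
    unfolding lpo_iso_def by blast
  define f' where "f' = inv_into (car X) f"
  define g' where "g' = inv_into (car Y) g"
  have f1: "\<And>x. x \<in> car X \<Longrightarrow> f x \<in> car X'" using f(1) bij_betwE by blast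
  have f2: "\<And>x. x \<in> car X' \<Longrightarrow> f' x \<in> car X" unfolding f'_def
    using f(1) bij_betw_inv_into bij_betwE by blast
  have f3: "\<And>x. x \<in> car X \<Longrightarrow> f' (f x) = x" unfolding f'_def
    using f(1) bij_betw_inv_into_left by metis
  have f4: "\<And>x. x \<in> car X' \<Longrightarrow> f (f' x) = x" unfolding f'_def
    using f(1) bij_betw_inv_into_right by metis
  have g1: "\<And>x. x \<in> car Y \<Longrightarrow> g x \<in> car Y'" using g(1) bij_betwE by blast
  have g2: "\<And>x. x \<in> car Y' \<Longrightarrow> g' x \<in> car Y" unfolding g'_def
    using g(1) bij_betw_inv_into bij_betwE by blast
  have g3: "\<And>x. x \<in> car Y \<Longrightarrow> g' (g x) = x" unfolding g'_def
    using g(1) bij_betw_inv_into_left by metis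
  have g4: "\<And>x. x \<in> car Y' \<Longrightarrow> g (g' x) = x" unfolding g'_def
    using g(1) bij_betw_inv_into_right by metis
  show ?thesis
  proof (rule iso_intro[where f="\<lambda>m. if even m then 2 * f (m div 2) else 2 * g (m div 2) + 1"
        and g="\<lambda>m. if even m then 2 * f' (m div 2) else 2 * g' (m div 2) + 1"])
    fix x assume "x \<in> car (seq_raw X Y)"
    then show "(if even x then 2 * f (x div 2) else 2 * g (x div 2) + 1) \<in> car (seq_raw X' Y')"
      using f1 g1 by (auto simp: car_seq)
  next
    fix x assume "x \<in> car (seq_raw X' Y')"
    then show "(if even x then 2 * f' (x div 2) else 2 * g' (x div 2) + 1) \<in> car (seq_raw X Y)"
      using f2 g2 by (auto simp: car_seq)
  next
    fix x assume "x \<in> car (seq_raw X Y)"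
    then show "(\<lambda>m. if even m then 2 * f' (m div 2) else 2 * g' (m div 2) + 1)
       (if even x then 2 * f (x div 2) else 2 * g (x div 2) + 1) = x"
      using f3 g3 by (auto simp: car_seq)
  next
    fix x assume "x \<in> car (seq_raw X' Y')"
    then show "(\<lambda>m. if even m then 2 * f (m div 2) else 2 * g (m div 2) + 1)
       (if even x then 2 * f' (x div 2) else 2 * g' (x div 2) + 1) = x"
      using f4 g4 by (auto simp: car_seq)
  next
    fix x assume "x \<in> car (seq_raw X Y)"
    then show "lab (seq_raw X' Y') (if even x then 2 * f (x div 2) else 2 * g (x div 2) + 1) =
         lab (seq_raw X Y) x"
      using f(2) g(2) by (auto simp: car_seq lab_seq)
  next
    fix x y assume "x \<in> car (seq_raw X Y)" "y \<in> car (seq_raw X Y)"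
    then show "((x, y) \<in> ord (seq_raw X Y)) =
         ((if even x then 2 * f (x div 2) else 2 * g (x div 2) + 1,
           if even y then 2 * f (y div 2) else 2 * g (y div 2) + 1) \<in> ord (seq_raw X' Y'))"
      using f(3) g(3) f1 g1 by (auto simp: car_seq ord_seq)
  qed
qed


lemma iso_assoc: "lpo_iso (seq_raw (seq_raw X Y) Z) (seq_raw X (seq_raw Y Z))"
proof (rule iso_intro[where
    f="\<lambda>m. if even m then (if even (m div 2) then 2 * (m div 2 div 2) else 2 * (2 * (m div 2 div 2)) + 1)
            else 2 * (2 * (m div 2) + 1) + 1"
    and g="\<lambda>n. if even n then 2 * (2 * (n div 2))
            else (if even (n div 2) then 2 * (2 * (n div 2 div 2) + 1) else 2 * (n div 2 div 2) + 1)"])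
qed ((auto simp: car_seq lab_seq ord_seq simp del: odd_two_times_div_two_nat), presburger+)

lemma wf_one: "wf_lpo one_raw"
  unfolding wf_lpo_def one_raw_def car_def ord_def partial_order_on_def preorder_on_def
      refl_on_def trans_def antisym_def by simp

lemma car_one: "car one_raw = {}" by (simp add: one_raw_def car_def)
lemma ord_one: "ord one_raw = {}" by (simp add: one_raw_def ord_def)

lemma iso_unit: "lpo_iso (seq_raw X one_raw) X"
proof (rule iso_intro[where f="\<lambda>m. m div 2" and g="\<lambda>n. 2 * n"])
qed (auto simp: car_seq lab_seq ord_seq car_one ord_one)


lemma iso_unit_l: "lpo_iso (seq_raw one_raw X) X"
proof (rule iso_intro[where f="\<lambda>m. m div 2" and g="\<lambda>n. 2 * n + 1"])
qed (auto simp: car_seq lab_seq ord_seq car_one ord_one)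

lemma rep_wf: "wf_lpo (rep_pomset U)"
  using Quotient3_rep_reflp[OF Quotient3_pomset, of U] unfolding pom_rel_def by simp

lemma abs_eqI: "wf_lpo X \<Longrightarrow> wf_lpo Y \<Longrightarrow> lpo_iso X Y \<Longrightarrow> abs_pomset X = abs_pomset Y"
  using Quotient3_rel_abs[OF Quotient3_pomset] unfolding pom_rel_def by blast

lemma rep_abs_iso: "wf_lpo X \<Longrightarrow> lpo_iso (rep_pomset (abs_pomset X)) X"
  using Quotient3_rep_abs[OF Quotient3_pomset, of X] lpo_iso_refl[of X] unfolding pom_rel_def by blast

lemma abs_rep: "abs_pomset (rep_pomset U) = U"
  using Quotient3_abs_rep[OF Quotient3_pomset] by blast

lemma pom_seq_one: "pom_seq U pom_one = U"
proof -
  have "pom_seq U pom_one = abs_pomset (seq_raw (rep_pomset U) (rep_pomset (abs_pomset one_raw)))"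
    unfolding pom_seq_def pom_one_def ..
  also have "\<dots> = abs_pomset (rep_pomset U)"
  proof (rule abs_eqI)
    show "wf_lpo (seq_raw (rep_pomset U) (rep_pomset (abs_pomset one_raw)))"
      by (intro wf_seq rep_wf)
    show "wf_lpo (rep_pomset U)" by (rule rep_wf)
    show "lpo_iso (seq_raw (rep_pomset U) (rep_pomset (abs_pomset one_raw))) (rep_pomset U)"
      by (rule lpo_iso_trans[OF iso_seq[OF lpo_iso_refl rep_abs_iso[OF wf_one]] iso_unit])
  qed
  finally show ?thesis by (simp add: abs_rep)
qed

lemma one_seq_pom: "pom_seq pom_one U = U"
proof -
  have "pom_seq pom_one U = abs_pomset (seq_raw (rep_pomset (abs_pomset one_raw)) (rep_pomset U))"
    unfolding pom_seq_def pom_one_def ..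
  also have "\<dots> = abs_pomset (rep_pomset U)"
  proof (rule abs_eqI)
    show "wf_lpo (seq_raw (rep_pomset (abs_pomset one_raw)) (rep_pomset U))"
      by (intro wf_seq rep_wf)
    show "wf_lpo (rep_pomset U)" by (rule rep_wf)
    show "lpo_iso (seq_raw (rep_pomset (abs_pomset one_raw)) (rep_pomset U)) (rep_pomset U)"
      by (rule lpo_iso_trans[OF iso_seq[OF rep_abs_iso[OF wf_one] lpo_iso_refl] iso_unit_l])
  qed
  finally show ?thesis by (simp add: abs_rep)
qed

lemma pom_seq_assoc: "pom_seq (pom_seq U V) W = pom_seq U (pom_seq V W)"
proof -
  let ?u = "rep_pomset U" and ?v = "rep_pomset V" and ?w = "rep_pomset W"
  have "pom_seq (pom_seq U V) W = abs_pomset (seq_raw (rep_pomset (abs_pomset (seq_raw ?u ?v))) ?w)"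
    unfolding pom_seq_def ..
  also have "\<dots> = abs_pomset (seq_raw ?u (rep_pomset (abs_pomset (seq_raw ?v ?w))))"
  proof (rule abs_eqI)
    show "wf_lpo (seq_raw (rep_pomset (abs_pomset (seq_raw ?u ?v))) ?w)"
      by (intro wf_seq rep_wf)
    show "wf_lpo (seq_raw ?u (rep_pomset (abs_pomset (seq_raw ?v ?w))))"
      by (intro wf_seq rep_wf)
    have a: "lpo_iso (seq_raw (rep_pomset (abs_pomset (seq_raw ?u ?v))) ?w) (seq_raw (seq_raw ?u ?v) ?w)"
      by (rule iso_seq[OF rep_abs_iso lpo_iso_refl]) (intro wf_seq rep_wf)
    have b: "lpo_iso (seq_raw ?u (seq_raw ?v ?w)) (seq_raw ?u (rep_pomset (abs_pomset (seq_raw ?v ?w))))"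
      by (rule iso_seq[OF lpo_iso_refl lpo_iso_sym[OF rep_abs_iso]]) (intro wf_seq rep_wf)
    show "lpo_iso (seq_raw (rep_pomset (abs_pomset (seq_raw ?u ?v))) ?w)
        (seq_raw ?u (rep_pomset (abs_pomset (seq_raw ?v ?w))))"
      by (rule lpo_iso_trans[OF a lpo_iso_trans[OF iso_assoc b]])
  qed
  also have "\<dots> = pom_seq U (pom_seq V W)"
    unfolding pom_seq_def ..
  finally show ?thesis .
qed

lemma pom_seqs_append: "pom_seqs (Us @ Vs) = pom_seq (pom_seqs Us) (pom_seqs Vs)"
proof (induction Us)
  case Nil
  show ?case by (simp add: one_seq_pom)
next
  case (Cons U Us)
  then show ?case by (simp add: pom_seq_assoc)
qed


inductive chain for \<delta> \<gamma> F where
  ch_nil: "chain \<delta> \<gamma> F q [] q"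
| ch_cons: "unit_trace \<delta> \<gamma> F q U q'' \<Longrightarrow> chain \<delta> \<gamma> F q'' Us q' \<Longrightarrow> chain \<delta> \<gamma> F q (U # Us) q'"

lemma chain_append: "chain \<delta> \<gamma> F q Us q'' \<Longrightarrow> chain \<delta> \<gamma> F q'' Vs q' \<Longrightarrow> chain \<delta> \<gamma> F q (Us @ Vs) q'"
  by (induction rule: chain.induct) (auto intro: chain.intros)

lemma trace_chain: "trace \<delta> \<gamma> F q U q' \<Longrightarrow> \<exists>Us. U = pom_seqs Us \<and> chain \<delta> \<gamma> F q Us q'"
proof (induction rule: trace.induct)
  case (tr_one q)
  show ?case by (rule exI[of _ "[]"]) (auto intro: chain.intros)
next
  case (tr_atom q a)
  have "unit_trace \<delta> \<gamma> F q (pom_atom a) (\<delta> q a)" unfolding unit_trace_def by blast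
  then show ?case
    by (intro exI[of _ "[pom_atom a]"]) (auto intro: chain.intros simp: pom_seq_one)
next
  case (tr_seq q U q'' V q')
  then obtain Us Vs where "U = pom_seqs Us" "chain \<delta> \<gamma> F q Us q''"
    "V = pom_seqs Vs" "chain \<delta> \<gamma> F q'' Vs q'" by blast
  then show ?case
    by (intro exI[of _ "Us @ Vs"]) (auto intro: chain_append simp: pom_seqs_append)
next
  case (tr_par r U r' s V s' q)
  have "unit_trace \<delta> \<gamma> F q (pom_par U V) (\<gamma> q r s)" unfolding unit_trace_def
    using tr_par.hyps by blast
  then show ?case
    by (intro exI[of _ "[pom_par U V]"]) (auto intro: chain.intros simp: pom_seq_one)
qed

lemma chain_idx: "chain \<delta> \<gamma> F q Us q' \<Longrightarrow> \<exists>qs. length qs = Suc (length Us) \<and> qs ! 0 = q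
   \<and> qs ! length Us = q' \<and> (\<forall>i<length Us. unit_trace \<delta> \<gamma> F (qs ! i) (Us ! i) (qs ! Suc i))"
proof (induction rule: chain.induct)
  case (ch_nil q)
  show ?case by (rule exI[of _ "[q]"]) simp
next
  case (ch_cons q U q'' Us q')
  then obtain qs where qs: "length qs = Suc (length Us)" "qs ! 0 = q''"
   "qs ! length Us = q'" "\<forall>i<length Us. unit_trace \<delta> \<gamma> F (qs ! i) (Us ! i) (qs ! Suc i)" by blast
  show ?case
  proof (rule exI[of _ "q # qs"], intro conjI allI impI)
    fix i assume "i < length (U # Us)"
    then show "unit_trace \<delta> \<gamma> F ((q # qs) ! i) ((U # Us) ! i) ((q # qs) ! Suc i)"
      using qs ch_cons.hyps(1) by (cases i) auto
  qed (use qs in auto)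
qed

theorem mainTheorem8:
  fixes \<delta> :: "'q \<Rightarrow> 'a::finite \<Rightarrow> 'q" and \<gamma> :: "'q \<Rightarrow> 'q \<Rightarrow> 'q \<Rightarrow> 'q" and F :: "'q set"
    and qbot qtop q q' :: 'q and U :: "'a pomset"
  assumes "is_PA \<delta> \<gamma> F qbot qtop"
    and "trace \<delta> \<gamma> F q U q'"
  shows "\<exists>(l::nat) (qs::'q list) (Us::'a pomset list).
           length qs = Suc l \<and> length Us = l \<and> qs ! 0 = q \<and> qs ! l = q'
         \<and> U = pom_seqs Us
         \<and> (\<forall>i<l. unit_trace \<delta> \<gamma> F (qs ! i) (Us ! i) (qs ! Suc i))"
proof -
  obtain Us where U: "U = pom_seqs Us" and c: "chain \<delta> \<gamma> F q Us q'"
    using trace_chain[OF assms(2)] by blast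
  obtain qs where "length qs = Suc (length Us)" "qs ! 0 = q"
   "qs ! length Us = q'" "\<forall>i<length Us. unit_trace \<delta> \<gamma> F (qs ! i) (Us ! i) (qs ! Suc i)"
    using chain_idx[OF c] by blast
  then show ?thesis using U by blast
qed

end
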